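(* Suppose there is $D>0$ such that for all $\alpha\in(0,\alpha_{\max})$ $$\sum_{\lambda_i\le\alpha}|\langle x^\dagger,u_i\rangle|^2\le D\sum_{\lambda_i\ge\alpha}\frac{\alpha}{\lambda_i}|\langle x^\dagger,u_i\rangle|^2.$$ Then there is a constant $C$ depending only on $D$ (e.g. $C=\sqrt{8(D+1)}$) such that for all $\alpha\in(0,\alpha_{\max})$ $$\|x_\alpha-x^\dagger\|\le C\,\psi_{SL}(\alpha,x^\dagger).$$
   Context: Let $X,Y$ be real Hilbert spaces and $A:X\to Y$ a compact linear operator with singular system $(\sigma_i,u_i,v_i)_i$, $\sigma_i>0$; put $\lambda_i=\sigma_i^2$. Let $x^\dagger\in N(A)^\perp$, $y=Ax^\dagger$, $x_\alpha=(A^*A+\alpha I)^{-1}A^*y$, $\alpha_{\max}>0$ fixed, and $\psi_{SL}(\alpha,x^\dagger):=\Big(\sum_i\frac{\alpha\lambda_i^2}{(\lambda_i+\alpha)^3}|\langle x^\dagger,u_i\rangle|^2\Big)^{1/2}$. *)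

theory Defs
  imports "HOL-Analysis.Analysis"
begin

text \<open>Real Hilbert spaces are modelled by types of class real_inner and complete_space.\<close>

definition is_adjoint :: "('a::real_inner \<Rightarrow> 'b::real_inner) \<Rightarrow> ('b \<Rightarrow> 'a) \<Rightarrow> bool" where
  "is_adjoint A As \<longleftrightarrow> (\<forall>x y. inner (A x) y = inner x (As y))"

definition compact_operator :: "('a::real_normed_vector \<Rightarrow> 'b::real_normed_vector) \<Rightarrow> bool" where
  "compact_operator A \<longleftrightarrow> bounded_linear A \<and> compact (closure (A ` ball 0 1))"

definition orthonormal_on :: "nat set \<Rightarrow> (nat \<Rightarrow> 'a::real_inner) \<Rightarrow> bool" where
  "orthonormal_on I e \<longleftrightarrow> (\<forall>i\<in>I. \<forall>j\<in>I. inner (e i) (e j) = (if i = j then 1 else 0))"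

definition singular_system ::
  "('a::real_inner \<Rightarrow> 'b::real_inner) \<Rightarrow> ('b \<Rightarrow> 'a) \<Rightarrow> nat set \<Rightarrow> (nat \<Rightarrow> real)
    \<Rightarrow> (nat \<Rightarrow> 'a) \<Rightarrow> (nat \<Rightarrow> 'b) \<Rightarrow> bool" where
  "singular_system A As I \<sigma> u v \<longleftrightarrow>
     (\<forall>i\<in>I. \<sigma> i > 0) \<and> orthonormal_on I u \<and> orthonormal_on I v \<and>
     (\<forall>i\<in>I. A (u i) = \<sigma> i *\<^sub>R v i \<and> As (v i) = \<sigma> i *\<^sub>R u i) \<and>
     (\<forall>x. ((\<lambda>i. (\<sigma> i * inner x (u i)) *\<^sub>R v i) has_sum A x) I)"

definition tikhonov :: "('a::real_inner \<Rightarrow> 'b::real_inner) \<Rightarrow> ('b \<Rightarrow> 'a) \<Rightarrow> 'b \<Rightarrow> real \<Rightarrow> 'a" where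
  "tikhonov A As y \<alpha> = (THE x. As (A x) + \<alpha> *\<^sub>R x = As y)"

definition psi_SL :: "nat set \<Rightarrow> (nat \<Rightarrow> real) \<Rightarrow> (nat \<Rightarrow> 'a::real_inner) \<Rightarrow> real \<Rightarrow> 'a \<Rightarrow> real" where
  "psi_SL I \<sigma> u \<alpha> xd =
     sqrt (\<Sum>\<^sub>\<infinity>i\<in>I. \<alpha> * (\<sigma> i)\<^sup>2 ^ 2 / ((\<sigma> i)\<^sup>2 + \<alpha>) ^ 3 * \<bar>inner xd (u i)\<bar>\<^sup>2)"

end

theory Submission
  imports Defs
begin

lemma ortho_finite_norm:
  fixes u :: "nat \<Rightarrow> 'a::real_inner"
  assumes ON: "orthonormal_on I u" and F: "finite F" "F \<subseteq> I"
  shows "(norm (\<Sum>i\<in>F. a i *\<^sub>R u i))^2 = (\<Sum>i\<in>F. (a i)^2)"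
proof -
  have "(norm (\<Sum>i\<in>F. a i *\<^sub>R u i))^2 = inner (\<Sum>i\<in>F. a i *\<^sub>R u i) (\<Sum>j\<in>F. a j *\<^sub>R u j)"
    by (simp add: power2_norm_eq_inner)
  also have "\<dots> = (\<Sum>i\<in>F. \<Sum>j\<in>F. a i * a j * inner (u i) (u j))"
    by (subst sum.swap) (simp add: inner_sum_left inner_sum_right sum_distrib_left mult_ac)
  also have "\<dots> = (\<Sum>i\<in>F. \<Sum>j\<in>F. (if j = i then a i * a i else 0))"
  proof (rule sum.cong[OF refl], rule sum.cong[OF refl])
    fix i j assume "i \<in> F" "j \<in> F"
    then have "inner (u i) (u j) = (if i = j then 1 else 0)" using ON F unfolding orthonormal_on_def by blast
    then show "a i * a j * inner (u i) (u j) = (if j = i then a i * a i else 0)" by auto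
  qed
  also have "\<dots> = (\<Sum>i\<in>F. (a i)^2)"
    using F by (simp add: power2_eq_square)
  finally show ?thesis .
qed

lemma ortho_summable:
  fixes u :: "nat \<Rightarrow> 'a::{real_inner,complete_space}"
  assumes ON: "orthonormal_on I u" and S: "(\<lambda>i. (a i)^2) summable_on I"
  shows "(\<lambda>i. a i *\<^sub>R u i) summable_on I"
proof -
  define f where "f i = a i *\<^sub>R u i" for i
  define g where "g i = (a i)^2" for i
  from S obtain L where lim: \<open>(sum g \<longlongrightarrow> L) (finite_subsets_at_top I)\<close>
    unfolding has_sum_def summable_on_def g_def by blast
  have normdiff: "dist (sum f F) (sum f F') = sqrt (dist (sum g F) (sum g F'))"
    if "finite F" "F \<subseteq> I" "F' \<subseteq> F" for F F'
  proof -
    have fF': "finite F'" using that finite_subset by blast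
    have "dist (sum f F) (sum f F') = norm (sum f (F-F'))"
      unfolding dist_norm using that by (subst sum_diff) auto
    also have "\<dots> = sqrt ((norm (sum f (F-F')))^2)" by simp
    also have "(norm (sum f (F-F')))^2 = sum g (F - F')"
      unfolding f_def g_def using ortho_finite_norm[OF ON, of "F - F'" a] that by auto
    also have "sum g (F - F') = dist (sum g F) (sum g F')"
    proof -
      have "sum g (F - F') \<ge> 0" by (simp add: g_def sum_nonneg)
      moreover have "sum g (F - F') = sum g F - sum g F'" using that by (subst sum_diff) auto
      ultimately show ?thesis by (simp add: dist_real_def)
    qed
    finally show ?thesis .
  qed
  have \<open>\<exists>P. eventually P (finite_subsets_at_top I) \<and>
              (\<forall>F F'. P F \<and> P F' \<longrightarrow> dist (sum f F) (sum f F') < e)\<close> if epos: \<open>e>0\<close> for e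
  proof -
    define d P where \<open>d = e^2/8\<close> and \<open>P F \<longleftrightarrow> finite F \<and> F \<subseteq> I \<and> dist (sum g F) L < d\<close> for F
    then have \<open>d > 0\<close>
      using epos by (simp add: d_def)
    have ev_P: \<open>eventually P (finite_subsets_at_top I)\<close>
      using lim
      by (auto simp add: P_def[abs_def] \<open>0 < d\<close> eventually_conj_iff eventually_finite_subsets_at_top_weakI tendsto_iff)
    moreover have \<open>dist (sum f F1) (sum f F2) < e\<close> if \<open>P F1\<close> and \<open>P F2\<close> for F1 F2
    proof -
      from ev_P
      obtain F' where \<open>finite F'\<close> and \<open>F' \<subseteq> I\<close> and P_sup_F': \<open>finite F \<and> F \<supseteq> F' \<and> F \<subseteq> I \<Longrightarrow> P F\<close> for F
        by atomize_elim (simp add: eventually_finite_subsets_at_top)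
      define F where \<open>F = F' \<union> F1 \<union> F2\<close>
      have \<open>finite F\<close> and \<open>F \<subseteq> I\<close>
        using F_def P_def[abs_def] that \<open>finite F'\<close> \<open>F' \<subseteq> I\<close> by auto
      have dist_F: \<open>dist (sum g F) L < d\<close>
        by (metis F_def \<open>F \<subseteq> I\<close> P_def P_sup_F' \<open>finite F\<close> le_supE order_refl)
      have dist_F_subset: \<open>dist (sum f F) (sum f F') < sqrt (2*d)\<close> if F': \<open>F' \<subseteq> F\<close> \<open>P F'\<close> for F'
      proof -
        have \<open>dist (sum f F) (sum f F') = sqrt (dist (sum g F) (sum g F'))\<close>
          using normdiff \<open>finite F\<close> \<open>F \<subseteq> I\<close> F' by blast
        also have \<open>\<dots> < sqrt (2 * d)\<close>
          using dist_F F' unfolding P_def dist_real_def by (intro real_sqrt_less_mono) linarith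
        finally show ?thesis .
      qed
      have \<open>dist (sum f F1) (sum f F2) \<le> dist (sum f F) (sum f F1) + dist (sum f F) (sum f F2)\<close>
        by (rule dist_triangle3)
      also have \<open>\<dots> < sqrt (2*d) + sqrt (2*d)\<close>
        by (intro add_strict_mono dist_F_subset that) (auto simp: F_def)
      also have \<open>sqrt (2*d) = e/2\<close>
      proof -
        have "2*d = (e/2)^2" by (simp add: d_def power2_eq_square field_simps)
        then show ?thesis using \<open>e>0\<close> by simp
      qed
      finally show \<open>dist (sum f F1) (sum f F2) < e\<close> by simp
    qed
    ultimately show ?thesis
      by blast
  qed
  then have \<open>cauchy_filter (filtermap (sum f) (finite_subsets_at_top I))\<close>
    by (simp add: cauchy_filter_metric_filtermap)
  moreover have "complete (UNIV::'a set)"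
    by (meson Cauchy_convergent UNIV_I complete_def convergent_def)
  ultimately obtain L' where \<open>(sum f \<longlongrightarrow> L') (finite_subsets_at_top I)\<close>
    using complete_uniform[where S=UNIV] by (force simp add: filterlim_def)
  then show ?thesis
    using summable_on_def has_sum_def f_def by (metis (no_types, lifting) ext)
qed

lemma ortho_inner:
  assumes "((\<lambda>i. a i *\<^sub>R u i) has_sum x) I"
  shows "((\<lambda>i. a i * inner (u i) z) has_sum inner x z) I"
  using has_sum_bounded_linear[OF bounded_linear_inner_left[of z] assms] by simp

lemma ortho_coeff:
  assumes ON: "orthonormal_on I u" and H: "((\<lambda>i. a i *\<^sub>R u i) has_sum x) I" and j: "j \<in> I"
  shows "inner x (u j) = a j"
proof -
  have 1: "((\<lambda>i. a i * inner (u i) (u j)) has_sum inner x (u j)) I" by (rule ortho_inner[OF H])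
  have "((\<lambda>i. a i * inner (u i) (u j)) has_sum (\<Sum>i\<in>{j}. a i * inner (u i) (u j))) {j}"
    by (rule has_sum_finite) simp
  then have "((\<lambda>i. a i * inner (u i) (u j)) has_sum a j) {j}" using ON j unfolding orthonormal_on_def by simp
  then have 2: "((\<lambda>i. a i * inner (u i) (u j)) has_sum a j) I"
    by (rule has_sum_cong_neutral[THEN iffD1, rotated -1]) (use ON j in \<open>auto simp: orthonormal_on_def\<close>)
  show ?thesis using has_sum_unique[OF 1 2] .
qed

lemma ortho_norm:
  assumes ON: "orthonormal_on I u" and H: "((\<lambda>i. a i *\<^sub>R u i) has_sum x) I"
  shows "((\<lambda>i. (a i)^2) has_sum (norm x)^2) I"
proof -
  have "((\<lambda>i. a i * inner (u i) x) has_sum inner x x) I" by (rule ortho_inner[OF H])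
  moreover have "\<And>i. i \<in> I \<Longrightarrow> a i * inner (u i) x = (a i)^2"
    using ortho_coeff[OF ON H] by (simp add: power2_eq_square inner_commute)
  ultimately have "((\<lambda>i. (a i)^2) has_sum inner x x) I"
    using has_sum_cong[of I "\<lambda>i. a i * inner (u i) x" "\<lambda>i. (a i)^2" "inner x x"] by blast
  then show ?thesis by (simp add: power2_norm_eq_inner)
qed

lemma bessel:
  fixes u :: "nat \<Rightarrow> 'a::real_inner"
  assumes ON: "orthonormal_on I u"
  shows "(\<lambda>i. (inner x (u i))^2) summable_on I"
proof (rule nonneg_bdd_above_summable_on)
  show "bdd_above (sum (\<lambda>i. (inner x (u i))^2) ` {F. F \<subseteq> I \<and> finite F})"
  proof (rule bdd_aboveI2)
    fix F assume "F \<in> {F. F \<subseteq> I \<and> finite F}"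
    then have F: "F \<subseteq> I" "finite F" by auto
    define s where "s = (\<Sum>i\<in>F. inner x (u i) *\<^sub>R u i)"
    have ns: "(norm s)^2 = (\<Sum>i\<in>F. (inner x (u i))^2)"
      unfolding s_def using ortho_finite_norm[OF ON F(2) F(1)] .
    have xs: "inner x s = (\<Sum>i\<in>F. (inner x (u i))^2)"
      unfolding s_def by (simp add: inner_sum_right power2_eq_square)
    have "0 \<le> (norm (x - s))^2" by simp
    also have "\<dots> = (norm x)^2 - 2 * inner x s + (norm s)^2"
      by (simp add: power2_norm_eq_inner inner_diff_left inner_diff_right inner_commute)
    finally show "(\<Sum>i\<in>F. (inner x (u i))^2) \<le> (norm x)^2" using ns xs by simp
  qed
qed simp


lemma pw0: "0 < a \<Longrightarrow> 0 < l \<Longrightarrow> (l/(l+a)*c)^2 \<le> (c::real)^2"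
proof -
  assume a: "0 < a" and l: "0 < l"
  have "\<bar>l/(l+a)*c\<bar> = l/(l+a) * \<bar>c\<bar>" using a l by (simp add: abs_mult)
  also have "\<dots> \<le> \<bar>c\<bar>" using a l by (intro mult_left_le_one_le) auto
  finally show ?thesis by (simp add: abs_le_square_iff[symmetric])
qed

lemma pw1:
  assumes a: "0 < a" and l: "0 < l" and al: "a \<le> l"
  shows "(l/(l+a)*c - c)^2 \<le> 8 * (a * l^2/(l+a)^3 * \<bar>c::real\<bar>^2)"
proof -
  have e: "(l/(l+a)*c - c)^2 = (a/(l+a))^2 * c^2" using a l by (simp add: field_simps power2_eq_square)
  have "(a/(l+a))^2 \<le> 8 * (a * l^2/(l+a)^3)"
  proof -
    have h1: "a*a \<le> l*l" using mult_mono[of a l a l] a al by auto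
    have h2: "a*l \<le> l*l" using mult_right_mono[of a l l] al l by auto
    have "a * (l + a) = a*l + a*a" by (simp add: algebra_simps)
    moreover have "8 * l^2 = 8*(l*l)" by (simp add: power2_eq_square)
    moreover have "0 \<le> l*l" by simp
    ultimately have "a * (l + a) \<le> 8 * l^2" using h1 h2 by linarith
    then have "a * a * (l + a) \<le> a * (8 * l^2)" using a by (metis mult.assoc mult_left_mono less_imp_le)
    have t: "l + a \<noteq> 0" using a l by simp
    have "(a/(l+a))^2 = (a*a)/((l+a)*(l+a))" by (simp add: power2_eq_square)
    also have "\<dots> = (a*a*(l+a))/((l+a)*(l+a)*(l+a))" using t by (rule mult_divide_mult_cancel_right[symmetric])
    also have "\<dots> = (a*a*(l+a))/(l+a)^3" by (simp add: power3_eq_cube)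
    finally have "(a/(l+a))^2 = (a*a*(l+a))/(l+a)^3" .
    also have "\<dots> \<le> (a*(8*l^2))/(l+a)^3" using \<open>a * a * (l + a) \<le> a * (8 * l^2)\<close> a l by (intro divide_right_mono) auto
    also have "\<dots> = 8*(a*l^2/(l+a)^3)" by simp
    finally show ?thesis .
  qed
  then have "(a/(l+a))^2 * c^2 \<le> 8 * (a * l^2/(l+a)^3) * c^2" by (rule mult_right_mono) simp
  then show ?thesis using e by simp
qed

lemma pw3:
  assumes a: "0 < a" and l: "0 < l" and al: "a \<le> l"
  shows "a / l * \<bar>c\<bar>^2 \<le> 8 * (a * l^2/(l+a)^3 * \<bar>c::real\<bar>^2)"
proof -
  have "a / l \<le> 8 * (a * l^2/(l+a)^3)"
  proof -
    have "(l+a)^3 \<le> (2*l)^3" using a al by (intro power_mono) auto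
    then have "(l+a)^3 \<le> 8 * l^3" by simp
    then have "a * l^2/(8 * l^3) \<le> a * l^2/(l+a)^3" using a l by (intro frac_le) auto
    moreover have "a * l^2/(8 * l^3) = a / l / 8" using l by (simp add: field_simps power2_eq_square power3_eq_cube)
    ultimately show ?thesis by simp
  qed
  then have "a / l * \<bar>c\<bar>^2 \<le> 8 * (a * l^2/(l+a)^3) * \<bar>c\<bar>^2" by (rule mult_right_mono) simp
  then show ?thesis by simp
qed

lemma pw4:
  assumes a: "0 < a" and l: "0 < l"
  shows "a * l^2/(l+a)^3 * \<bar>c::real\<bar>^2 \<le> \<bar>c\<bar>^2" "0 \<le> a * l^2/(l+a)^3 * \<bar>c::real\<bar>^2"
proof -
  have "a * l^2 \<le> (l+a)^3"
  proof -
    have "a * l^2 \<le> (l+a) * (l+a)^2" using a l by (intro mult_mono power_mono) auto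
    then show ?thesis by (simp add: power2_eq_square power3_eq_cube)
  qed
  then have "a * l^2/(l+a)^3 \<le> 1" using a l by simp
  then show "a * l^2/(l+a)^3 * \<bar>c::real\<bar>^2 \<le> \<bar>c\<bar>^2" by (intro mult_left_le_one_le) (use a l in auto)
  show "0 \<le> a * l^2/(l+a)^3 * \<bar>c::real\<bar>^2" using a l by simp
qed

lemma pw5:
  assumes a: "0 < a" and al: "a \<le> l"
  shows "a / l * \<bar>c::real\<bar>^2 \<le> \<bar>c\<bar>^2" "0 \<le> a / l * \<bar>c::real\<bar>^2"
proof -
  have "a/l \<le> 1" "0 \<le> a/l" using a al by auto
  then have "a/l * \<bar>c\<bar>^2 \<le> 1 * \<bar>c\<bar>^2" by (intro mult_right_mono) auto
  then show "a / l * \<bar>c::real\<bar>^2 \<le> \<bar>c\<bar>^2" by simp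
  show "0 \<le> a / l * \<bar>c::real\<bar>^2" using \<open>0 \<le> a/l\<close> by (intro mult_nonneg_nonneg) auto
qed


theorem mainTheorem6:
  fixes A :: "'a::{real_inner,complete_space} \<Rightarrow> 'b::{real_inner,complete_space}"
    and As :: "'b \<Rightarrow> 'a"
    and I :: "nat set" and \<sigma> :: "nat \<Rightarrow> real" and u :: "nat \<Rightarrow> 'a" and v :: "nat \<Rightarrow> 'b"
    and xd :: 'a and \<alpha>max D :: real
  assumes "compact_operator A"
    and "is_adjoint A As"
    and "singular_system A As I \<sigma> u v"
    and "\<forall>z. A z = 0 \<longrightarrow> inner xd z = 0"
    and "\<alpha>max > 0"
    and "D > 0"
    and "\<forall>\<alpha>. 0 < \<alpha> \<and> \<alpha> < \<alpha>max \<longrightarrow>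
           (\<Sum>\<^sub>\<infinity>i\<in>{i\<in>I. (\<sigma> i)\<^sup>2 \<le> \<alpha>}. \<bar>inner xd (u i)\<bar>\<^sup>2)
           \<le> D * (\<Sum>\<^sub>\<infinity>i\<in>{i\<in>I. (\<sigma> i)\<^sup>2 \<ge> \<alpha>}. \<alpha> / (\<sigma> i)\<^sup>2 * \<bar>inner xd (u i)\<bar>\<^sup>2)"
  shows "\<forall>\<alpha>. 0 < \<alpha> \<and> \<alpha> < \<alpha>max \<longrightarrow>
           norm (tikhonov A As (A xd) \<alpha> - xd) \<le> sqrt (8 * (D + 1)) * psi_SL I \<sigma> u \<alpha> xd"
proof (intro allI impI)
  fix \<alpha> assume \<alpha>: "0 < \<alpha> \<and> \<alpha> < \<alpha>max"
  then have apos: "0 < \<alpha>" by simp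
  from assms(3) have spos: "\<forall>i\<in>I. \<sigma> i > 0" and ONu: "orthonormal_on I u"
    and Auv: "\<forall>i\<in>I. A (u i) = \<sigma> i *\<^sub>R v i \<and> As (v i) = \<sigma> i *\<^sub>R u i"
    and hasA: "\<forall>x. ((\<lambda>i. (\<sigma> i * inner x (u i)) *\<^sub>R v i) has_sum A x) I"
    unfolding singular_system_def by auto
  have blA: "bounded_linear A" using assms(1) unfolding compact_operator_def by auto
  then interpret A: bounded_linear A .
  have adj: "\<And>x y. inner (A x) y = inner x (As y)" using assms(2) unfolding is_adjoint_def by auto
  define c where "c i = inner xd (u i)" for i
  define l where "l i = (\<sigma> i)^2" for i
  define a where "a i = l i / (l i + \<alpha>) * c i" for i
  have lpos: "\<And>i. i\<in>I \<Longrightarrow> l i > 0" using spos by (auto simp: l_def)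
  have csum: "(\<lambda>i. (c i)^2) summable_on I" unfolding c_def by (rule bessel[OF ONu])
  have asum: "(\<lambda>i. (a i)^2) summable_on I"
    by (rule summable_on_comparison_test[OF csum]) (use pw0 apos lpos in \<open>auto simp: a_def\<close>)
  obtain w where hw: "((\<lambda>i. a i *\<^sub>R u i) has_sum w) I"
    using ortho_summable[OF ONu asum] summable_on_def by blast
  obtain s where hs: "((\<lambda>i. c i *\<^sub>R u i) has_sum s) I"
    using ortho_summable[OF ONu csum] summable_on_def by blast
  have gram: "((\<lambda>i. l i * inner x (u i) * inner z (u i)) has_sum inner (A x) (A z)) I" for x z
  proof -
    have "((\<lambda>i. inner ((\<sigma> i * inner x (u i)) *\<^sub>R v i) (A z)) has_sum inner (A x) (A z)) I"
      using has_sum_bounded_linear[OF bounded_linear_inner_left[of "A z"] hasA[rule_format, of x]] by simp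
    moreover have "inner ((\<sigma> i * inner x (u i)) *\<^sub>R v i) (A z) = l i * inner x (u i) * inner z (u i)"
      if i: "i \<in> I" for i
    proof -
      have "inner (v i) (A z) = inner z (As (v i))" using adj[of z "v i"] by (simp add: inner_commute)
      also have "\<dots> = \<sigma> i * inner z (u i)" using Auv i by simp
      finally show ?thesis by (simp add: l_def power2_eq_square)
    qed
    ultimately show ?thesis
      using has_sum_cong[of I "\<lambda>i. inner ((\<sigma> i * inner x (u i)) *\<^sub>R v i) (A z)"
          "\<lambda>i. l i * inner x (u i) * inner z (u i)" "inner (A x) (A z)"] by blast
  qed
  have xds: "xd = s"
  proof -
    have "((\<lambda>i. A (c i *\<^sub>R u i)) has_sum A s) I" using has_sum_bounded_linear[OF blA hs] .
    moreover have "\<And>i. i\<in>I \<Longrightarrow> A (c i *\<^sub>R u i) = (\<sigma> i * inner xd (u i)) *\<^sub>R v i"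
      using Auv by (simp add: A.scaleR c_def)
    ultimately have "((\<lambda>i. (\<sigma> i * inner xd (u i)) *\<^sub>R v i) has_sum A s) I"
      using has_sum_cong[of I "\<lambda>i. A (c i *\<^sub>R u i)" "\<lambda>i. (\<sigma> i * inner xd (u i)) *\<^sub>R v i" "A s"] by blast
    then have "A s = A xd" using has_sum_unique hasA by blast
    then have "A (xd - s) = 0" by (simp add: A.diff)
    then have 1: "inner xd (xd - s) = 0" using assms(4) by blast
    have h: "((\<lambda>i. c i * inner (u i) (xd - s)) has_sum inner s (xd - s)) I" by (rule ortho_inner[OF hs])
    have "((\<lambda>i. c i * inner (u i) (xd - s)) has_sum 0) I"
      by (rule has_sum_0) (use ortho_coeff[OF ONu hs] in \<open>simp add: inner_diff_right c_def inner_commute\<close>)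
    then have 2: "inner s (xd - s) = 0" using has_sum_unique h by blast
    have "inner (xd - s) (xd - s) = 0" using 1 2 by (simp add: inner_diff_left)
    then show ?thesis by simp
  qed
  have wa: "\<And>i. i\<in>I \<Longrightarrow> inner w (u i) = a i" using ortho_coeff[OF ONu hw] .
  have eqw: "As (A w) + \<alpha> *\<^sub>R w = As (A xd)"
  proof -
    have key: "inner (As (A w) + \<alpha> *\<^sub>R w) z = inner (As (A xd)) z" for z
    proof -
      have g1: "((\<lambda>i. l i * inner w (u i) * inner z (u i)) has_sum inner (A w) (A z)) I" by (rule gram)
      have g2: "((\<lambda>i. \<alpha> * (a i * inner (u i) z)) has_sum \<alpha> * inner w z) I"
        by (rule has_sum_cmult_right[OF ortho_inner[OF hw]])
      have g3: "((\<lambda>i. l i * inner w (u i) * inner z (u i) + \<alpha> * (a i * inner (u i) z))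
          has_sum inner (A w) (A z) + \<alpha> * inner w z) I" by (rule has_sum_add[OF g1 g2])
      have g4: "((\<lambda>i. l i * inner xd (u i) * inner z (u i)) has_sum inner (A xd) (A z)) I" by (rule gram)
      have eq: "l i * inner w (u i) * inner z (u i) + \<alpha> * (a i * inner (u i) z)
          = l i * inner xd (u i) * inner z (u i)" if i: "i \<in> I" for i
      proof -
        have la: "(l i + \<alpha>) * a i = l i * c i" using lpos[OF i] apos by (simp add: a_def field_simps)
        have "l i * inner w (u i) * inner z (u i) + \<alpha> * (a i * inner (u i) z)
            = ((l i + \<alpha>) * a i) * inner z (u i)"
          using wa[OF i] by (simp add: inner_commute algebra_simps)
        also have "\<dots> = l i * inner xd (u i) * inner z (u i)" using la by (simp add: c_def)
        finally show ?thesis .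
      qed
      have "((\<lambda>i. l i * inner xd (u i) * inner z (u i)) has_sum inner (A w) (A z) + \<alpha> * inner w z) I"
        using g3 has_sum_cong[of I "\<lambda>i. l i * inner w (u i) * inner z (u i) + \<alpha> * (a i * inner (u i) z)"
          "\<lambda>i. l i * inner xd (u i) * inner z (u i)"] eq by blast
      then have sumeq: "inner (A w) (A z) + \<alpha> * inner w z = inner (A xd) (A z)"
        using has_sum_unique g4 by blast
      have "inner (As (A w)) z = inner (A w) (A z)" using adj[of z "A w"] by (simp add: inner_commute)
      moreover have "inner (As (A xd)) z = inner (A xd) (A z)" using adj[of z "A xd"] by (simp add: inner_commute)
      ultimately show ?thesis using sumeq by (simp add: inner_add_left)
    qed
    have "inner (As (A w) + \<alpha> *\<^sub>R w - As (A xd)) (As (A w) + \<alpha> *\<^sub>R w - As (A xd)) = 0"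
      unfolding inner_diff_left using key by simp
    then show ?thesis by simp
  qed
  have uniq: "x = w" if hx: "As (A x) + \<alpha> *\<^sub>R x = As (A xd)" for x
  proof -
    define d where "d = x - w"
    have "inner (As (A x) + \<alpha> *\<^sub>R x) d - inner (As (A w) + \<alpha> *\<^sub>R w) d = 0" using hx eqw by simp
    moreover have "inner (As (A x)) d = inner (A d) (A x)" using adj[of d "A x"] by (simp add: inner_commute)
    moreover have "inner (As (A w)) d = inner (A d) (A w)" using adj[of d "A w"] by (simp add: inner_commute)
    ultimately have e1: "inner (A d) (A x) - inner (A d) (A w) + \<alpha> * (inner x d - inner w d) = 0"
      by (simp add: inner_add_left algebra_simps)
    have "A d = A x - A w" unfolding d_def by (rule A.diff)
    then have e2: "inner (A d) (A d) = inner (A d) (A x) - inner (A d) (A w)" by (simp add: inner_diff_right)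
    have e3: "inner d d = inner x d - inner w d" using inner_diff_left[of x w d] unfolding d_def[symmetric] .
    have "inner (A d) (A d) + \<alpha> * inner d d = 0" using e1 e2 e3 by simp
    moreover have "inner (A d) (A d) \<ge> 0" "\<alpha> * inner d d \<ge> 0" using apos by simp_all
    ultimately have "\<alpha> * inner d d = 0" by linarith
    then have "inner d d = 0" using apos by simp
    then show ?thesis unfolding d_def by simp
  qed
  have tik: "tikhonov A As (A xd) \<alpha> = w"
    unfolding tikhonov_def using eqw uniq by (rule the_equality)
  have "((\<lambda>i. - (c i *\<^sub>R u i)) has_sum (- s)) I" using hs by (simp add: has_sum_uminus)
  from has_sum_add[OF hw this]
  have "((\<lambda>i. a i *\<^sub>R u i + - (c i *\<^sub>R u i)) has_sum (w - s)) I" by simp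
  then have hd: "((\<lambda>i. (a i - c i) *\<^sub>R u i) has_sum (w - s)) I"
    by (simp add: scaleR_diff_left)
  have N: "((\<lambda>i. (a i - c i)^2) has_sum (norm (w - xd))^2) I" using ortho_norm[OF ONu hd] xds by simp
  define e where "e i = (a i - c i)^2" for i
  define p where "p i = \<alpha> * (\<sigma> i)\<^sup>2 ^ 2 / ((\<sigma> i)\<^sup>2 + \<alpha>) ^ 3 * \<bar>inner xd (u i)\<bar>\<^sup>2" for i
  define q where "q i = \<alpha> / (\<sigma> i)\<^sup>2 * \<bar>inner xd (u i)\<bar>\<^sup>2" for i
  define cc where "cc i = \<bar>inner xd (u i)\<bar>\<^sup>2" for i
  define L where "L = {i\<in>I. (\<sigma> i)\<^sup>2 < \<alpha>}"
  define G where "G = {i\<in>I. (\<sigma> i)\<^sup>2 \<ge> \<alpha>}"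
  define L' where "L' = {i\<in>I. (\<sigma> i)\<^sup>2 \<le> \<alpha>}"
  have IGL: "I = L \<union> G" "L \<inter> G = {}" "L \<subseteq> I" "G \<subseteq> I" "L \<subseteq> L'" "L' \<subseteq> I"
    unfolding L_def G_def L'_def by auto
  have spos': "\<And>i. i \<in> I \<Longrightarrow> 0 < (\<sigma> i)\<^sup>2" using lpos l_def by simp
  have Ne: "(norm (w - xd))^2 = infsum e I" using N unfolding e_def by (simp add: infsumI)
  have esum: "e summable_on I" using N unfolding e_def summable_on_def by blast
  have ccsum: "cc summable_on I" using csum unfolding cc_def c_def by simp
  have p_le: "p i \<le> cc i" "0 \<le> p i" if i: "i \<in> I" for i
    unfolding p_def cc_def by (rule pw4(1)[OF apos spos'[OF i]], rule pw4(2)[OF apos spos'[OF i]])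
  have q_le: "q i \<le> cc i" "0 \<le> q i" if i: "i \<in> G" for i
    unfolding q_def cc_def by (rule pw5(1)[OF apos], use i in \<open>simp add: G_def\<close>, rule pw5(2)[OF apos], use i in \<open>simp add: G_def\<close>)
  have q_p: "q i \<le> 8 * p i" if i: "i \<in> G" for i
  proof -
    have iI: "i \<in> I" "\<alpha> \<le> (\<sigma> i)\<^sup>2" using i by (auto simp: G_def)
    show ?thesis unfolding q_def p_def by (rule pw3[OF apos spos'[OF iI(1)] iI(2)])
  qed
  have e_p: "e i \<le> 8 * p i" if i: "i \<in> G" for i
  proof -
    have iI: "i \<in> I" "\<alpha> \<le> (\<sigma> i)\<^sup>2" using i by (auto simp: G_def)
    show ?thesis unfolding e_def p_def a_def c_def l_def by (rule pw1[OF apos spos'[OF iI(1)] iI(2)])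
  qed
  have e_c: "e i \<le> cc i" if i: "i \<in> I" for i
  proof -
    have "e i = ((\<sigma> i)\<^sup>2/((\<sigma> i)\<^sup>2 + \<alpha>) * c i - c i)^2" unfolding e_def a_def l_def ..
    also have "\<dots> = (\<alpha>/((\<sigma> i)\<^sup>2 + \<alpha>) * c i)^2"
    proof -
      have nz: "(\<sigma> i)\<^sup>2 + \<alpha> \<noteq> 0" using apos spos'[OF i] by linarith
      have "(\<sigma> i)\<^sup>2/((\<sigma> i)\<^sup>2 + \<alpha>) * c i - c i = - (\<alpha>/((\<sigma> i)\<^sup>2 + \<alpha>) * c i)"
        using nz by (simp add: field_simps)
      then show ?thesis by simp
    qed
    also have "\<dots> \<le> (c i)^2" using pw0[of "(\<sigma> i)\<^sup>2" \<alpha> "c i"] apos spos'[OF i] by (simp add: add.commute)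
    finally show ?thesis by (simp add: cc_def c_def)
  qed
  have psum: "p summable_on I"
    by (rule summable_on_comparison_test[OF ccsum]) (use p_le in auto)
  have qsum: "q summable_on G"
    by (rule summable_on_comparison_test[OF summable_on_subset_banach[OF ccsum IGL(4)]])
       (use q_le in auto)
  have ple: "infsum p G \<le> infsum p I"
    by (rule infsum_mono_neutral[OF summable_on_subset_banach[OF psum IGL(4)] psum])
       (use p_le IGL in auto)
  have pnn: "0 \<le> infsum p G"
    by (rule infsum_nonneg) (use p_le IGL in auto)
  have esplit: "infsum e I = infsum e L + infsum e G"
    using infsum_Un_disjoint[OF summable_on_subset_banach[OF esum IGL(3)] summable_on_subset_banach[OF esum IGL(4)] IGL(2)]
      IGL(1) by simp
  have eL: "infsum e L \<le> infsum cc L'"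
    by (rule infsum_mono_neutral[OF summable_on_subset_banach[OF esum IGL(3)] summable_on_subset_banach[OF ccsum IGL(6)]])
       (use e_c IGL in \<open>auto simp: cc_def\<close>)
  have H: "infsum cc L' \<le> D * infsum q G"
    using assms(7) \<alpha> unfolding cc_def L'_def q_def G_def by blast
  have qG: "infsum q G \<le> 8 * infsum p G"
  proof -
    have "infsum q G \<le> infsum (\<lambda>i. 8 * p i) G"
      by (rule infsum_mono[OF qsum summable_on_cmult_right[OF summable_on_subset_banach[OF psum IGL(4)]]])
         (use q_p in auto)
    also have "\<dots> = 8 * infsum p G" by (rule infsum_cmult_right') 
    finally show ?thesis .
  qed
  have eG: "infsum e G \<le> 8 * infsum p G"
  proof -
    have "infsum e G \<le> infsum (\<lambda>i. 8 * p i) G"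
      by (rule infsum_mono[OF summable_on_subset_banach[OF esum IGL(4)] summable_on_cmult_right[OF summable_on_subset_banach[OF psum IGL(4)]]])
         (use e_p in auto)
    also have "\<dots> = 8 * infsum p G" by (rule infsum_cmult_right')
    finally show ?thesis .
  qed
  have "D * infsum q G \<le> D * (8 * infsum p G)" using qG assms(6) by (intro mult_left_mono) auto
  then have bound: "infsum e I \<le> 8 * (D + 1) * infsum p I"
    using esplit eL H eG ple pnn assms(6) by (simp add: algebra_simps) (smt (verit) mult_left_mono)
  have "norm (tikhonov A As (A xd) \<alpha> - xd) = sqrt ((norm (w - xd))^2)" using tik by simp
  also have "\<dots> \<le> sqrt (8 * (D + 1) * infsum p I)" using Ne bound by simp
  also have "\<dots> = sqrt (8 * (D + 1)) * psi_SL I \<sigma> u \<alpha> xd"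
    unfolding psi_SL_def p_def by (simp add: real_sqrt_mult)
  finally show "norm (tikhonov A As (A xd) \<alpha> - xd) \<le> sqrt (8 * (D + 1)) * psi_SL I \<sigma> u \<alpha> xd" .
qed


end
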